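(* Assume $r<n$. Then for every solution of system (S) with initial condition in $\mathcal{D}^0$, the total mite population $M(t)+N(t)$ tends to $0$ as $t\to+\infty$.
   Context: All parameters $b,\lambda,\gamma,m,\mu,r,n,p,h,\beta,\delta,e$ are positive constants. Here $B,I$ denote healthy and infected bees and $M,N$ healthy and infected mites. The model (S) is $$B'=\frac{bB}{B+I}-\lambda BN-\gamma BI-mB,\qquad I'=\frac{bI}{B+I}+\lambda BN+\gamma BI-(m+\mu)I,$$ $$M'=r(M+N)-nM-\frac{p}{h(B+I)}M(M+N)-M(\beta I+\delta N+eB),$$ $$N'=-nN-\frac{p}{h(B+I)}N(M+N)+\beta MI+\delta MN-eNB,$$ considered on the domain $\mathcal{D}^0=\{(B,I,M,N)\in\mathbb{R}^4_+ : B+I\neq 0\}$, where $\mathbb{R}_+=[0,\infty)$. *)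

theory Defs
  imports "HOL-Analysis.Analysis"
begin

definition D0 :: "real \<Rightarrow> real \<Rightarrow> real \<Rightarrow> real \<Rightarrow> bool" where
  "D0 B I M N \<longleftrightarrow> B \<ge> 0 \<and> I \<ge> 0 \<and> M \<ge> 0 \<and> N \<ge> 0 \<and> B + I \<noteq> 0"

definition solution_S ::
  "real \<Rightarrow> real \<Rightarrow> real \<Rightarrow> real \<Rightarrow> real \<Rightarrow> real \<Rightarrow> real \<Rightarrow> real \<Rightarrow> real \<Rightarrow> real \<Rightarrow> real \<Rightarrow> real \<Rightarrow>
   (real \<Rightarrow> real) \<Rightarrow> (real \<Rightarrow> real) \<Rightarrow> (real \<Rightarrow> real) \<Rightarrow> (real \<Rightarrow> real) \<Rightarrow> bool" where
  "solution_S b lam \<gamma> m \<mu> r n p h \<beta> \<delta> e B I M N \<longleftrightarrow>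
    (\<forall>t\<ge>0. B t + I t \<noteq> 0 \<and>
      (B has_real_derivative
         (b * B t / (B t + I t) - lam * B t * N t - \<gamma> * B t * I t - m * B t)) (at t within {0..}) \<and>
      (I has_real_derivative
         (b * I t / (B t + I t) + lam * B t * N t + \<gamma> * B t * I t - (m + \<mu>) * I t)) (at t within {0..}) \<and>
      (M has_real_derivative
         (r * (M t + N t) - n * M t - p / (h * (B t + I t)) * M t * (M t + N t)
          - M t * (\<beta> * I t + \<delta> * N t + e * B t))) (at t within {0..}) \<and>
      (N has_real_derivative
         (- n * N t - p / (h * (B t + I t)) * N t * (M t + N t)
          + \<beta> * M t * I t + \<delta> * M t * N t - e * N t * B t)) (at t within {0..}))"

end

theory Submission imports Defs begin

lemma mono_from_deriv:
  fixes f :: "real \<Rightarrow> real"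
  assumes "\<forall>t\<in>{a..b}. (f has_real_derivative f' t) (at t within {0..})"
    and "\<forall>t\<in>{a..b}. f' t \<ge> 0" and "0 \<le> a" "a \<le> b"
  shows "f a \<le> f b"
proof (rule DERIV_nonneg_imp_increasing_open[OF \<open>a \<le> b\<close>])
  fix x assume x: "a < x" "x < b"
  have "x \<in> interior {0::real..}" using x assms(3) by simp
  hence "at x within {0..} = at x" by (rule at_within_interior)
  thus "\<exists>y. DERIV f x :> y \<and> y \<ge> 0" using assms(1,2) x assms(3)
    by (metis atLeastAtMost_iff less_imp_le)
next
  show "continuous_on {a..b} f"
    unfolding continuous_on_eq_continuous_within
  proof
    fix t assume t: "t \<in> {a..b}"
    have "continuous (at t within {0..}) f" using assms(1) t by (meson DERIV_continuous)
    thus "continuous (at t within {a..b}) f"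
      by (rule continuous_within_subset) (use assms(3) in auto)
  qed
qed

lemma lin_sign:
  fixes x g :: "real \<Rightarrow> real"
  assumes d: "\<forall>t\<ge>0. (x has_real_derivative g t * x t) (at t within {0..})"
    and gc: "continuous_on {0..} g" and x0: "x 0 \<ge> 0" and T: "T \<ge> 0"
  shows "x T \<ge> 0"
proof -
  have "compact (g ` {0..T})"
    using gc by (intro compact_continuous_image) (auto intro: continuous_on_subset)
  then obtain K where K: "K > 0" "\<forall>t\<in>{0..T}. \<bar>g t\<bar> \<le> K"
    using compact_imp_bounded bounded_pos by (metis image_eqI real_norm_def)
  have dI: "\<And>t. t \<ge> 0 \<Longrightarrow> ((\<lambda>t. (x t)^2 * exp (2*K*t)) has_real_derivative
      (2 * (x t)^2 * exp (2*K*t) * (g t + K))) (at t within {0..})"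
  proof -
    fix t :: real assume t: "t \<ge> 0"
    have p: "((\<lambda>t. (x t)^2) has_real_derivative of_nat 2 * ((g t * x t) * x t ^ (2 - Suc 0))) (at t within {0..})"
      by (rule DERIV_power[OF d[rule_format, OF t]])
    have ex: "((\<lambda>t. exp (2*K*t)) has_real_derivative exp (2*K*t) * (2*K * 1)) (at t within {0..})"
      by (intro derivative_intros DERIV_cmult DERIV_ident)
    show "?thesis t"
    proof (rule DERIV_cong[OF DERIV_mult[OF p ex]])
      have eq: "\<And>E. of_nat 2 * ((g t * x t) * x t ^ (2 - Suc 0)) * E + E * (2*K * 1) * (x t)^2
         = 2 * (x t)^2 * E * (g t + K)"
        by (simp add: power2_eq_square distrib_left distrib_right)
      show "of_nat 2 * ((g t * x t) * x t ^ (2 - Suc 0)) * exp (2*K*t) + exp (2*K*t) * (2*K * 1) * (x t)^2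
         = 2 * (x t)^2 * exp (2*K*t) * (g t + K)"
        by (rule eq)
    qed
  qed
  have dD: "\<And>t. t \<ge> 0 \<Longrightarrow> ((\<lambda>t. - ((x t)^2 * exp (-(2*K*t)))) has_real_derivative
      (2 * (x t)^2 * exp (-(2*K*t)) * (K - g t))) (at t within {0..})"
  proof -
    fix t :: real assume t: "t \<ge> 0"
    have p: "((\<lambda>t. (x t)^2) has_real_derivative of_nat 2 * ((g t * x t) * x t ^ (2 - Suc 0))) (at t within {0..})"
      by (rule DERIV_power[OF d[rule_format, OF t]])
    have ex: "((\<lambda>t. exp (-(2*K*t))) has_real_derivative exp (-(2*K*t)) * (-(2*K * 1))) (at t within {0..})"
      by (intro derivative_intros DERIV_cmult DERIV_ident)
    show "?thesis t"
    proof (rule DERIV_cong[OF DERIV_minus[OF DERIV_mult[OF p ex]]])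
      have eq: "\<And>E. - (of_nat 2 * ((g t * x t) * x t ^ (2 - Suc 0)) * E + E * (-(2*K * 1)) * (x t)^2)
         = 2 * (x t)^2 * E * (K - g t)"
        by (simp add: power2_eq_square right_diff_distrib distrib_left distrib_right)
      show "- (of_nat 2 * ((g t * x t) * x t ^ (2 - Suc 0)) * exp (-(2*K*t)) + exp (-(2*K*t)) * (-(2*K * 1)) * (x t)^2)
         = 2 * (x t)^2 * exp (-(2*K*t)) * (K - g t)"
        by (rule eq)
    qed
  qed
  show ?thesis
  proof (cases "x 0 = 0")
    case True
    have "- ((x 0)^2 * exp (-(2*K*0))) \<le> - ((x T)^2 * exp (-(2*K*T)))"
    proof (rule mono_from_deriv[where f'="\<lambda>t. 2 * (x t)^2 * exp (-(2*K*t)) * (K - g t)", OF _ _ order_refl T])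
      show "\<forall>t\<in>{0..T}. ((\<lambda>t. - ((x t)^2 * exp (-(2*K*t)))) has_real_derivative
          (2 * (x t)^2 * exp (-(2*K*t)) * (K - g t))) (at t within {0..})"
        using dD by simp
      show "\<forall>t\<in>{0..T}. 0 \<le> 2 * (x t)^2 * exp (-(2*K*t)) * (K - g t)"
      proof
        fix t assume "t \<in> {0..T}"
        hence "\<bar>g t\<bar> \<le> K" using K(2) by blast
        hence "K - g t \<ge> 0" by linarith
        thus "0 \<le> 2 * (x t)^2 * exp (-(2*K*t)) * (K - g t)" by simp
      qed
    qed
    hence "x T = 0" using True by (simp add: mult_le_0_iff)
    thus ?thesis by simp
  next
    case False
    have nz: "x t \<noteq> 0" if t: "t \<in> {0..T}" for t
    proof -
      have "(x 0)^2 * exp (2*K*0) \<le> (x t)^2 * exp (2*K*t)"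
      proof (rule mono_from_deriv[where f'="\<lambda>t. 2 * (x t)^2 * exp (2*K*t) * (g t + K)", OF _ _ order_refl])
        show "\<forall>s\<in>{0..t}. ((\<lambda>t. (x t)^2 * exp (2*K*t)) has_real_derivative
          (2 * (x s)^2 * exp (2*K* s) * (g s + K))) (at s within {0..})"
          using dI by simp
        show "\<forall>s\<in>{0..t}. 0 \<le> 2 * (x s)^2 * exp (2*K* s) * (g s + K)"
        proof
          fix s assume "s \<in> {0..t}"
          hence "s \<in> {0..T}" using t by simp
          hence "\<bar>g s\<bar> \<le> K" using K(2) by blast
          hence "g s + K \<ge> 0" by linarith
          thus "0 \<le> 2 * (x s)^2 * exp (2*K* s) * (g s + K)" by simp
        qed
        show "0 \<le> t" using t by simp
      qed
      thus ?thesis using False by auto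
    qed
    show ?thesis
    proof (rule ccontr)
      assume "\<not> 0 \<le> x T"
      have "continuous_on {0..T} x"
        unfolding continuous_on_eq_continuous_within
      proof
        fix t assume t: "t \<in> {0..T}"
        have "continuous (at t within {0..}) x" using d t by (meson DERIV_continuous atLeastAtMost_iff)
        thus "continuous (at t within {0..T}) x"
          by (rule continuous_within_subset) auto
      qed
      then obtain s where "0 \<le> s" "s \<le> T" "x s = 0"
        using IVT2'[of x T 0 0] \<open>\<not> 0 \<le> x T\<close> x0 T by auto
      thus False using nz by auto
    qed
  qed
qed

lemma cont_from_deriv:
  assumes "\<forall>t\<ge>0. \<exists>D. (f has_real_derivative D) (at t within {0..})"
  shows "continuous_on {0..} f"
  using assms unfolding continuous_on_eq_continuous_within
  by (meson DERIV_continuous atLeast_iff)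

theorem mainTheorem2:
  fixes b lam \<gamma> m \<mu> r n p h \<beta> \<delta> e :: real
    and B I M N :: "real \<Rightarrow> real"
  assumes "b > 0" "lam > 0" "\<gamma> > 0" "m > 0" "\<mu> > 0" "r > 0" "n > 0" "p > 0" "h > 0"
      "\<beta> > 0" "\<delta> > 0" "e > 0"
    and "r < n"
    and "solution_S b lam \<gamma> m \<mu> r n p h \<beta> \<delta> e B I M N"
    and "D0 (B 0) (I 0) (M 0) (N 0)"
  shows "((\<lambda>t. M t + N t) \<longlongrightarrow> 0) at_top"
proof -
  note sol = assms(14)[unfolded solution_S_def]
  have nz: "\<And>t. t \<ge> 0 \<Longrightarrow> B t + I t \<noteq> 0" using sol by blast
  have cB: "continuous_on {0..} B" by (rule cont_from_deriv) (use sol in blast)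
  have cI: "continuous_on {0..} I" by (rule cont_from_deriv) (use sol in blast)
  have cM: "continuous_on {0..} M" by (rule cont_from_deriv) (use sol in blast)
  have cN: "continuous_on {0..} N" by (rule cont_from_deriv) (use sol in blast)
  have S0: "B 0 + I 0 > 0" using assms(15) unfolding D0_def by auto
  have Spos: "B t + I t > 0" if t: "t \<ge> 0" for t
  proof (rule ccontr)
    assume "\<not> B t + I t > 0"
    have "continuous_on {0..t} (\<lambda>t. B t + I t)"
      using cB cI by (intro continuous_intros) (auto intro: continuous_on_subset)
    then obtain s where "0 \<le> s" "s \<le> t" "B s + I s = 0"
      using IVT2'[of "\<lambda>t. B t + I t" t 0 0] \<open>\<not> B t + I t > 0\<close> S0 t by auto
    thus False using nz by auto
  qed
  define gB where "gB t = b / (B t + I t) - lam * N t - \<gamma> * I t - m" for t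
  have cgB: "continuous_on {0..} gB"
    unfolding gB_def using cB cI cN nz by (intro continuous_intros) auto
  have Bnn: "B t \<ge> 0" if "t \<ge> 0" for t
  proof (rule lin_sign[OF _ cgB _ that])
    show "\<forall>t\<ge>0. (B has_real_derivative gB t * B t) (at t within {0..})"
    proof (intro allI impI)
      fix t :: real assume t: "t \<ge> 0"
      have "gB t * B t = b * B t / (B t + I t) - lam * B t * N t - \<gamma> * B t * I t - m * B t"
        unfolding gB_def using nz[OF t] by (simp add: field_simps)
      thus "(B has_real_derivative gB t * B t) (at t within {0..})" using sol t by metis
    qed
    show "0 \<le> B 0" using assms(15) unfolding D0_def by auto
  qed
  define V where "V t = M t + N t" for t
  define gV where "gV t = r - n - p * V t / (h * (B t + I t)) - e * B t" for t
  have dV: "(V has_real_derivative gV t * V t) (at t within {0..})" if t: "t \<ge> 0" for t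
  proof -
    have "(V has_real_derivative
       (r * (M t + N t) - n * M t - p / (h * (B t + I t)) * M t * (M t + N t)
          - M t * (\<beta> * I t + \<delta> * N t + e * B t)) + 
       (- n * N t - p / (h * (B t + I t)) * N t * (M t + N t)
          + \<beta> * M t * I t + \<delta> * M t * N t - e * N t * B t)) (at t within {0..})"
      unfolding V_def[abs_def] using sol t by (intro DERIV_add) auto
    moreover have "(r * (M t + N t) - n * M t - p / (h * (B t + I t)) * M t * (M t + N t)
          - M t * (\<beta> * I t + \<delta> * N t + e * B t)) + 
       (- n * N t - p / (h * (B t + I t)) * N t * (M t + N t)
          + \<beta> * M t * I t + \<delta> * M t * N t - e * N t * B t) = gV t * V t"
    proof -
      define q where "q = p / (h * (B t + I t))"
      have q: "p * V t / (h * (B t + I t)) = q * V t" unfolding q_def by simp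
      show ?thesis unfolding gV_def q unfolding q_def[symmetric] V_def by (simp add: algebra_simps)
    qed
    ultimately show ?thesis by simp
  qed
  have cV: "continuous_on {0..} V" unfolding V_def[abs_def] using cM cN by (intro continuous_intros)
  have cgV: "continuous_on {0..} gV"
    unfolding gV_def[abs_def] using cB cI cV nz assms(9) by (intro continuous_intros) auto
  have Vnn: "V t \<ge> 0" if "t \<ge> 0" for t
  proof (rule lin_sign[OF _ cgV _ that])
    show "\<forall>t\<ge>0. (V has_real_derivative gV t * V t) (at t within {0..})" using dV by blast
    show "0 \<le> V 0" using assms(15) by (simp add: D0_def V_def)
  qed
  have dW: "((\<lambda>t. - (V t * exp ((n - r) * t))) has_real_derivative
      - ((gV t + (n - r)) * V t * exp ((n - r) * t))) (at t within {0..})" if t: "t \<ge> 0" for t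
  proof -
    have ex: "((\<lambda>t. exp ((n - r) * t)) has_real_derivative exp ((n - r) * t) * ((n - r) * 1)) (at t within {0..})"
      by (intro derivative_intros DERIV_cmult DERIV_ident)
    have "((\<lambda>t. V t * exp ((n - r) * t)) has_real_derivative
       gV t * V t * exp ((n - r) * t) + exp ((n - r) * t) * ((n - r) * 1) * V t) (at t within {0..})"
      by (rule DERIV_mult[OF dV[OF t] ex])
    from DERIV_minus[OF this] show ?thesis by (simp add: algebra_simps)
  qed
  have bound: "V t \<le> V 0 * exp (- (n - r) * t)" if t: "t \<ge> 0" for t
  proof -
    have "- (V 0 * exp ((n - r) * 0)) \<le> - (V t * exp ((n - r) * t))"
    proof (rule mono_from_deriv[OF _ _ order_refl t])
      show "\<forall>s\<in>{0..t}. ((\<lambda>t. - (V t * exp ((n - r) * t))) has_real_derivative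
        - ((gV s + (n - r)) * V s * exp ((n - r) * s))) (at s within {0..})" using dW by auto
      show "\<forall>s\<in>{0..t}. 0 \<le> - ((gV s + (n - r)) * V s * exp ((n - r) * s))"
      proof
        fix s assume s: "s \<in> {0..t}"
        have "gV s + (n - r) = - (p * V s / (h * (B s + I s)) + e * B s)" unfolding gV_def by simp
        moreover have "p * V s / (h * (B s + I s)) \<ge> 0"
          using Vnn[of s] Spos[of s] s assms(8,9) by (auto intro!: divide_nonneg_pos)
        moreover have "e * B s \<ge> 0" using Bnn[of s] s assms(12) by auto
        moreover have "V s \<ge> 0" using Vnn[of s] s by auto
        ultimately show "0 \<le> - ((gV s + (n - r)) * V s * exp ((n - r) * s))"
          by (simp add: mult_nonpos_nonneg mult_nonneg_nonneg)
      qed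
    qed
    hence "V t * exp ((n - r) * t) \<le> V 0" by simp
    hence A: "V t * exp ((n - r) * t) * exp (- (n - r) * t) \<le> V 0 * exp (- (n - r) * t)"
      by (rule mult_right_mono) simp
    have E: "exp ((n - r) * t) * exp (- (n - r) * t) = 1" by (simp add: exp_add[symmetric] algebra_simps)
    have "V t * exp ((n - r) * t) * exp (- (n - r) * t) = V t" using E by (simp only: mult.assoc)
    thus ?thesis using A by linarith
  qed
  have lim: "((\<lambda>t. V 0 * exp (- (n - r) * t)) \<longlongrightarrow> 0) at_top"
  proof -
    have "LIM t at_top. (- (n - r)) * t :> at_bot"
      using assms(13) by (intro filterlim_tendsto_neg_mult_at_bot[OF tendsto_const _ filterlim_ident]) simp
    hence "((\<lambda>t. exp (- (n - r) * t)) \<longlongrightarrow> 0) at_top"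
      by (rule filterlim_compose[OF exp_at_bot])
    from tendsto_mult[OF tendsto_const[of "V 0"] this] show ?thesis by simp
  qed
  show ?thesis
  proof (rule tendsto_sandwich[OF _ _ tendsto_const lim])
    show "\<forall>\<^sub>F t in at_top. 0 \<le> M t + N t"
      using eventually_ge_at_top[of 0] by eventually_elim (use Vnn V_def in auto)
    show "\<forall>\<^sub>F t in at_top. M t + N t \<le> V 0 * exp (- (n - r) * t)"
      using eventually_ge_at_top[of 0] by eventually_elim (use bound V_def in auto)
  qed
qed

end
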